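(* Let $X$ be a set and let $\mathcal F:X^4\to\mathbb R$ satisfy, for all $x_1,x_2,x_3,x_4,w\in X$: $$\mathcal F(x_1,x_2,x_3,x_4)+\mathcal F(x_2,x_3,x_1,x_4)+\mathcal F(x_3,x_1,x_2,x_4)=0,$$ $$\mathcal F(x_2,x_1,x_3,x_4)=\mathcal F(x_1,x_2,x_4,x_3)=-\mathcal F(x_1,x_2,x_3,x_4),$$ $$\mathcal F(x_1,x_2,x_3,x_4)=\mathcal F(x_1,w,x_3,x_4)+\mathcal F(w,x_2,x_3,x_4).$$ Then there exists a function $g:X^2\to\mathbb R$ such that for all $x_1,x_2,x_3,x_4\in X$ $$\mathcal F(x_1,x_2,x_3,x_4)=g(x_1,x_3)-g(x_1,x_4)-g(x_2,x_3)+g(x_2,x_4).$$ Moreover, for any fixed $a,b\in X$ there is exactly one such $g$ satisfying the normalization $g(a,w)=g(w,b)=0$ for all $w\in X$ (namely $g(u,v)=\mathcal F(u,a,v,b)$). *)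

theory Defs
  imports Complex_Main
begin

end

theory Submission
  imports Defs
begin

theorem mainTheorem12:
  fixes F :: "'a \<Rightarrow> 'a \<Rightarrow> 'a \<Rightarrow> 'a \<Rightarrow> real"
  assumes cyc: "\<And>x1 x2 x3 x4. F x1 x2 x3 x4 + F x2 x3 x1 x4 + F x3 x1 x2 x4 = 0"
    and anti12: "\<And>x1 x2 x3 x4. F x2 x1 x3 x4 = - F x1 x2 x3 x4"
    and anti34: "\<And>x1 x2 x3 x4. F x1 x2 x4 x3 = - F x1 x2 x3 x4"
    and split: "\<And>x1 x2 x3 x4 w. F x1 x2 x3 x4 = F x1 w x3 x4 + F w x2 x3 x4"
  shows "(\<exists>g :: 'a \<Rightarrow> 'a \<Rightarrow> real. \<forall>x1 x2 x3 x4.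
            F x1 x2 x3 x4 = g x1 x3 - g x1 x4 - g x2 x3 + g x2 x4)
       \<and> (\<forall>a b. (\<exists>!g :: 'a \<Rightarrow> 'a \<Rightarrow> real.
              (\<forall>x1 x2 x3 x4. F x1 x2 x3 x4 = g x1 x3 - g x1 x4 - g x2 x3 + g x2 x4)
              \<and> (\<forall>w. g a w = 0 \<and> g w b = 0))
            \<and> (let g = (\<lambda>u v. F u a v b) in
                 (\<forall>x1 x2 x3 x4. F x1 x2 x3 x4 = g x1 x3 - g x1 x4 - g x2 x3 + g x2 x4)
                 \<and> (\<forall>w. g a w = 0 \<and> g w b = 0)))"
proof -
  have pair: "F p q r s = F r s p q" for p q r s
  proof -
    have c1: "F p q r s + F q r p s + F r p q s = 0" by (rule cyc)
    have c2: "F q r s p + F r s q p + F s q r p = 0" by (rule cyc)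
    have c3: "F r s p q + F s p r q + F p r s q = 0" by (rule cyc)
    have c4: "F s p q r + F p q s r + F q s p r = 0" by (rule cyc)
    have a1: "F q r s p = - F q r p s" by (rule anti34)
    have a2: "F r s q p = - F r s p q" by (rule anti34)
    have a3: "F s q r p = F q s p r" using anti12[of q s r p] anti34[of q s p r] by simp
    have a4: "F s p r q = F p s q r" using anti12[of p s r q] anti34[of p s q r] by simp
    have a5: "F p r s q = - F r p s q" by (rule anti12)
    have a6: "F r p s q = - F r p q s" by (rule anti34)
    have a7: "F s p q r = - F p s q r" by (rule anti12)
    have a8: "F p q s r = - F p q r s" by (rule anti34)
    have a9: "F q s p r = - F s q p r" by (rule anti12)
    have a10: "F s q p r = - F s q r p" by (rule anti34)
    show ?thesis using c1 c2 c3 c4 a1 a2 a3 a4 a5 a6 a7 a8 a9 a10 by linarith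
  qed
  have split2: "F x1 x2 x3 x4 = F x1 x2 x3 w + F x1 x2 w x4" for x1 x2 x3 x4 w
    using split[of x3 x4 x1 x2 w] pair[of x1 x2 x3 x4] pair[of x3 w x1 x2] pair[of w x4 x1 x2]
    by simp
  have rep: "F x1 x2 x3 x4 = F x1 a x3 b - F x1 a x4 b - F x2 a x3 b + F x2 a x4 b"
    for a b x1 x2 x3 x4
  proof -
    have "F x1 x2 x3 x4 = F x1 a x3 x4 - F x2 a x3 x4"
      using split[of x1 x2 x3 x4 a] anti12[of a x2 x3 x4] by simp
    moreover have "F u a x3 x4 = F u a x3 b - F u a x4 b" for u
      using split2[of u a x3 x4 b] anti34[of u a b x4] by simp
    ultimately show ?thesis by simp
  qed
  have z1: "F a a w b = 0" for a w b using anti12[of a a w b] by simp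
  have z2: "F w a b b = 0" for a w b using anti34[of w a b b] by simp
  show ?thesis
  proof (intro conjI allI)
    show "\<exists>g :: 'a \<Rightarrow> 'a \<Rightarrow> real. \<forall>x1 x2 x3 x4.
            F x1 x2 x3 x4 = g x1 x3 - g x1 x4 - g x2 x3 + g x2 x4"
    proof (rule exI[of _ "\<lambda>u v. F u undefined v undefined"])
      show "\<forall>x1 x2 x3 x4. F x1 x2 x3 x4 = F x1 undefined x3 undefined - F x1 undefined x4 undefined - F x2 undefined x3 undefined + F x2 undefined x4 undefined"
        using rep by blast
    qed
  next
    fix a b
    show "let g = (\<lambda>u v. F u a v b) in
                 (\<forall>x1 x2 x3 x4. F x1 x2 x3 x4 = g x1 x3 - g x1 x4 - g x2 x3 + g x2 x4)
                 \<and> (\<forall>w. g a w = 0 \<and> g w b = 0)"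
      using rep z1 z2 by simp
    show "\<exists>!g :: 'a \<Rightarrow> 'a \<Rightarrow> real.
              (\<forall>x1 x2 x3 x4. F x1 x2 x3 x4 = g x1 x3 - g x1 x4 - g x2 x3 + g x2 x4)
              \<and> (\<forall>w. g a w = 0 \<and> g w b = 0)"
    proof (rule ex1I[of _ "\<lambda>u v. F u a v b"])
      show "(\<forall>x1 x2 x3 x4. F x1 x2 x3 x4 = F x1 a x3 b - F x1 a x4 b - F x2 a x3 b + F x2 a x4 b)
              \<and> (\<forall>w. F a a w b = 0 \<and> F w a b b = 0)"
        using rep z1 z2 by simp
    next
      fix g :: "'a \<Rightarrow> 'a \<Rightarrow> real"
      assume h: "(\<forall>x1 x2 x3 x4. F x1 x2 x3 x4 = g x1 x3 - g x1 x4 - g x2 x3 + g x2 x4)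
              \<and> (\<forall>w. g a w = 0 \<and> g w b = 0)"
      show "g = (\<lambda>u v. F u a v b)"
      proof (intro ext)
        fix u v
        show "g u v = F u a v b" using h by simp
      qed
    qed
  qed
qed

end
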